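(* Let $q\ge2$ be even and $d\ge q+1$. Let $f$ be a density on $\mathbb{R}^d$ with mode $\boldsymbol\theta$, sufficiently smooth, whose $(q+1)$-st order term of the Taylor expansion around $\boldsymbol\theta$ is of the form $\prod_{i=1}^{q+1}\mathbf a_i^\top(\mathbf x-\boldsymbol\theta)$ with $\mathbf a_1,\ldots,\mathbf a_{q+1}\in\mathbb{R}^d$ linearly independent. Then there is a choice of $\mathrm Q$ for which the asymptotic bias of the kernel mode estimator with elliptic kernel is equal to zero, i.e. $\nabla(\nabla^\top\mathrm Q\nabla)^{q/2}f(\boldsymbol\theta)=\mathbf 0$.
   Context: Setting: $\mathrm A=\{Hf(\boldsymbol\theta)\}^{-1}$ is assumed to exist. For a radial $q$-th order kernel $K(\mathbf x)=G(\|\mathbf x\|)$ and a $d\times d$ matrix $\mathrm P$ with $|\det\mathrm P|=1$, the elliptic kernel is $K_{\mathrm P}(\mathbf x)=K(\mathrm P\mathbf x)$, and $\mathrm Q=\mathrm P^{-1}\mathrm P^{-\top}$ (a symmetric positive definite matrix; choosing $\mathrm Q$ is equivalent to choosing $\mathrm P$). The asymptotic bias of the kernel mode estimator with bandwidth $h_n$ and kernel $K_{\mathrm P}$ is $-\frac{\pi^{d/2}h_n^q}{2^{q-1}\Gamma(\frac{d+q}{2})\Gamma(\frac q2+1)}B_{d,q}(G)\,\mathrm A\,\nabla(\nabla^\top\mathrm Q\nabla)^{q/2}f(\boldsymbol\theta)$, where $B_{d,q}(G)=\int_0^\infty x^{d-1+q}G(x)dx\neq0$; hence it vanishes iff the vector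 $\nabla(\nabla^\top\mathrm Q\nabla)^{q/2}f(\boldsymbol\theta)$ (which depends only on the $(q+1)$-st order Taylor term of $f$ at $\boldsymbol\theta$) is zero. *)

theory Defs
  imports "HOL-Analysis.Analysis"
begin

definition pd :: "'n::finite \<Rightarrow> (real^'n \<Rightarrow> real) \<Rightarrow> real^'n \<Rightarrow> real" where
  "pd i g x = deriv (\<lambda>t. g (x + t *\<^sub>R axis i 1)) 0"

text \<open>Iterated partial derivatives (innermost index last in the list).\<close>
fun pds :: "'n::finite list \<Rightarrow> (real^'n \<Rightarrow> real) \<Rightarrow> real^'n \<Rightarrow> real" where
  "pds [] g = g"
| "pds (i # is) g = pd i (pds is g)"

definition smooth :: "(real^'n::finite \<Rightarrow> real) \<Rightarrow> bool" where
  "smooth g \<longleftrightarrow> (\<forall>is. continuous_on UNIV (pds is g) \<and>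
     (\<forall>i x. ((\<lambda>t. pds is g (x + t *\<^sub>R axis i 1)) has_real_derivative pds (i # is) g x) (at 0)))"

definition grad :: "(real^'n::finite \<Rightarrow> real) \<Rightarrow> real^'n \<Rightarrow> real^'n" where
  "grad g x = (\<chi> i. pd i g x)"

definition hess :: "(real^'n::finite \<Rightarrow> real) \<Rightarrow> real^'n \<Rightarrow> real^'n^'n" where
  "hess g x = (\<chi> j k. pd j (pd k g) x)"

definition opQ :: "real^'n^'n \<Rightarrow> (real^'n::finite \<Rightarrow> real) \<Rightarrow> real^'n \<Rightarrow> real" where
  "opQ Q g = (\<lambda>x. \<Sum>j\<in>UNIV. \<Sum>k\<in>UNIV. Q$j$k * pd j (pd k g) x)"

end

theory Submission
  imports Defs
begin

lemma D_at:
  fixes g :: "real^'n::finite \<Rightarrow> real"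
  assumes "\<And>y. ((\<lambda>t. g (y + t *\<^sub>R v)) has_real_derivative G y) (at 0)"
  shows "((\<lambda>t. g (x + t *\<^sub>R v)) has_real_derivative G (x + s *\<^sub>R v)) (at s)"
proof -
  have "((\<lambda>t. g ((x + s *\<^sub>R v) + t *\<^sub>R v)) has_real_derivative G (x + s *\<^sub>R v)) (at 0)"
    by (rule assms)
  moreover have "(\<lambda>t. g ((x + s *\<^sub>R v) + t *\<^sub>R v)) = (\<lambda>t. (\<lambda>t. g (x + t *\<^sub>R v)) (t + s))"
    by (simp add: algebra_simps)
  ultimately show ?thesis using DERIV_shift[of "\<lambda>t. g (x + t *\<^sub>R v)" _ 0 s] by simp
qed

lemma mixed_mvt:
  fixes g :: "real^'n::finite \<Rightarrow> real"
  assumes d1: "\<And>y. ((\<lambda>t. g (y + t *\<^sub>R u)) has_real_derivative g1 y) (at 0)"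
    and d2: "\<And>y. ((\<lambda>t. g1 (y + t *\<^sub>R v)) has_real_derivative g2 y) (at 0)"
    and h: "h > 0"
  shows "\<exists>\<xi> \<eta>. 0 < \<xi> \<and> \<xi> < h \<and> 0 < \<eta> \<and> \<eta> < h \<and>
    g (x + h *\<^sub>R u + h *\<^sub>R v) - g (x + h *\<^sub>R u) - g (x + h *\<^sub>R v) + g x
      = h * h * g2 (x + \<xi> *\<^sub>R u + \<eta> *\<^sub>R v)"
proof -
  define \<phi> where "\<phi> s = g ((x + h *\<^sub>R v) + s *\<^sub>R u) - g (x + s *\<^sub>R u)" for s
  have der: "DERIV \<phi> s :> g1 ((x + h *\<^sub>R v) + s *\<^sub>R u) - g1 (x + s *\<^sub>R u)" for s
    unfolding \<phi>_def
    by (intro derivative_intros D_at[where g=g and G=g1] d1)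
  have "\<exists>z>0. z < h \<and> \<phi> h - \<phi> 0 = (h - 0) * (\<lambda>s. g1 ((x + h *\<^sub>R v) + s *\<^sub>R u) - g1 (x + s *\<^sub>R u)) z"
    by (rule MVT2[OF h]) (rule der)
  then obtain \<xi> where \<xi>: "0 < \<xi>" "\<xi> < h"
    "\<phi> h - \<phi> 0 = (h - 0) * (g1 ((x + h *\<^sub>R v) + \<xi> *\<^sub>R u) - g1 (x + \<xi> *\<^sub>R u))"
    by blast
  define \<psi> where "\<psi> t = g1 ((x + \<xi> *\<^sub>R u) + t *\<^sub>R v)" for t
  have der2: "DERIV \<psi> t :> g2 ((x + \<xi> *\<^sub>R u) + t *\<^sub>R v)" for t
    unfolding \<psi>_def by (rule D_at[where g=g1 and G=g2]) (rule d2)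
  have "\<exists>z>0. z < h \<and> \<psi> h - \<psi> 0 = (h - 0) * (\<lambda>t. g2 ((x + \<xi> *\<^sub>R u) + t *\<^sub>R v)) z"
    by (rule MVT2[OF h]) (rule der2)
  then obtain \<eta> where \<eta>: "0 < \<eta>" "\<eta> < h"
    "\<psi> h - \<psi> 0 = (h - 0) * g2 ((x + \<xi> *\<^sub>R u) + \<eta> *\<^sub>R v)"
    by blast
  have "g (x + h *\<^sub>R u + h *\<^sub>R v) - g (x + h *\<^sub>R u) - g (x + h *\<^sub>R v) + g x = \<phi> h - \<phi> 0"
    unfolding \<phi>_def by (simp add: algebra_simps)
  also have "\<dots> = h * (\<psi> h - \<psi> 0)"
    using \<xi>(3) unfolding \<psi>_def by (simp add: algebra_simps)
  also have "\<dots> = h * h * g2 (x + \<xi> *\<^sub>R u + \<eta> *\<^sub>R v)"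
    using \<eta>(3) by simp
  finally show ?thesis using \<xi> \<eta> by blast
qed


lemma clairaut:
  fixes g :: "real^'n::finite \<Rightarrow> real" and w :: "real^'n"
  assumes dg: "\<And>k y. ((\<lambda>t. g (y + t *\<^sub>R axis k 1)) has_real_derivative pd k g y) (at 0)"
    and dgi: "\<And>k y. ((\<lambda>t. pd i g (y + t *\<^sub>R axis k 1)) has_real_derivative pd k (pd i g) y) (at 0)"
    and dgj: "\<And>k y. ((\<lambda>t. pd j g (y + t *\<^sub>R axis k 1)) has_real_derivative pd k (pd j g) y) (at 0)"
    and ci: "continuous_on UNIV (pd j (pd i g))"
    and cj: "continuous_on UNIV (pd i (pd j g))"
  shows "pd j (pd i g) x = pd i (pd j g) x"
proof -
  define A where "A = pd j (pd i g)"
  define B where "B = pd i (pd j g)"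
  define u where "u = (axis i 1 :: real^'n)"
  define v where "v = (axis j 1 :: real^'n)"
  have key: "\<exists>p p'. dist p x < 2*h \<and> dist p' x < 2*h \<and> A p = B p'" if h: "h > 0" for h
  proof -
    obtain \<xi> \<eta> where 1: "0 < \<xi>" "\<xi> < h" "0 < \<eta>" "\<eta> < h"
      "g (x + h *\<^sub>R u + h *\<^sub>R v) - g (x + h *\<^sub>R u) - g (x + h *\<^sub>R v) + g x
      = h * h * A (x + \<xi> *\<^sub>R u + \<eta> *\<^sub>R v)"
      using mixed_mvt[of g u "pd i g" v A h x] dg dgi h unfolding u_def v_def A_def by blast
    obtain \<xi>' \<eta>' where 2: "0 < \<xi>'" "\<xi>' < h" "0 < \<eta>'" "\<eta>' < h"
      "g (x + h *\<^sub>R v + h *\<^sub>R u) - g (x + h *\<^sub>R v) - g (x + h *\<^sub>R u) + g x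
      = h * h * B (x + \<xi>' *\<^sub>R v + \<eta>' *\<^sub>R u)"
      using mixed_mvt[of g v "pd j g" u B h x] dg dgj h unfolding u_def v_def B_def by blast
    have "g (x + h *\<^sub>R v + h *\<^sub>R u) = g (x + h *\<^sub>R u + h *\<^sub>R v)" by (simp add: add_ac)
    then have "h * h * A (x + \<xi> *\<^sub>R u + \<eta> *\<^sub>R v) = h * h * B (x + \<xi>' *\<^sub>R v + \<eta>' *\<^sub>R u)"
      using 1(5) 2(5) by linarith
    then have eq: "A (x + \<xi> *\<^sub>R u + \<eta> *\<^sub>R v) = B (x + \<xi>' *\<^sub>R v + \<eta>' *\<^sub>R u)"
      using h by simp
    have n: "dist (x + a *\<^sub>R u + b *\<^sub>R v) x < 2*h" if "0 < a" "a < h" "0 < b" "b < h" for a b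
    proof -
      have "dist (x + a *\<^sub>R u + b *\<^sub>R v) x = norm (a *\<^sub>R u + b *\<^sub>R v)"
        by (simp add: dist_norm)
      also have "\<dots> \<le> norm (a *\<^sub>R u) + norm (b *\<^sub>R v)" by (rule norm_triangle_ineq)
      also have "\<dots> = a + b" using that by (simp add: u_def v_def)
      finally show ?thesis using that by simp
    qed
    have n2: "dist (x + a *\<^sub>R v + b *\<^sub>R u) x < 2*h" if "0 < a" "a < h" "0 < b" "b < h" for a b
      using n[OF that(3,4,1,2)] by (simp add: add_ac)
    show ?thesis using eq n[OF 1(1-4)] n2[OF 2(1-4)] by blast
  qed
  have cA: "isCont A x" using ci continuous_on_eq_continuous_at[of UNIV] unfolding A_def by auto
  have cB: "isCont B x" using cj continuous_on_eq_continuous_at[of UNIV] unfolding B_def by auto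
  show ?thesis
  proof (rule ccontr)
    assume ne: "pd j (pd i g) x \<noteq> pd i (pd j g) x"
    define e where "e = \<bar>A x - B x\<bar> / 2"
    have e: "e > 0" using ne unfolding e_def A_def B_def by simp
    obtain d1 where d1: "d1 > 0" "\<And>y. dist y x < d1 \<Longrightarrow> dist (A y) (A x) < e"
      using cA e unfolding continuous_at_eps_delta by blast
    obtain d2 where d2: "d2 > 0" "\<And>y. dist y x < d2 \<Longrightarrow> dist (B y) (B x) < e"
      using cB e unfolding continuous_at_eps_delta by blast
    define h where "h = min d1 d2 / 2"
    have "h > 0" using d1 d2 unfolding h_def by simp
    then obtain p p' where pp: "dist p x < 2*h" "dist p' x < 2*h" "A p = B p'" using key by blast
    have "dist p x < d1" using pp unfolding h_def by simp
    then have "dist (A p) (A x) < e" using d1 by blast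
    moreover have "dist p' x < d2" using pp unfolding h_def by simp
    then have "dist (B p') (B x) < e" using d2 by blast
    ultimately have "\<bar>A x - B x\<bar> < 2 * e" using pp(3) unfolding dist_real_def by linarith
    then show False unfolding e_def by simp
  qed
qed

lemma chain2:
  fixes F :: "real \<Rightarrow> real \<Rightarrow> real"
  assumes dA: "\<And>s t. ((\<lambda>s. F s t) has_real_derivative A s t) (at s)"
    and dB: "\<And>s t. ((\<lambda>t. F s t) has_real_derivative B s t) (at t)"
    and cB: "continuous_on UNIV (\<lambda>(s,t). B s t)"
  shows "((\<lambda>t. F t t) has_real_derivative A t0 t0 + B t0 t0) (at t0)"
proof -
  have fx: "((\<lambda>x. F x t0) has_derivative (*) (A t0 t0)) (at t0 within UNIV)"
    using dA[of t0 t0] by (simp add: has_field_derivative_def)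
  have fy: "((\<lambda>y. F x y) has_derivative blinfun_apply (blinfun_mult_right (B x y))) (at y within UNIV)"
    if "x \<in> UNIV" "y \<in> UNIV" for x y
    using dB[of x y] by (simp add: has_field_derivative_def)
  have cB': "isCont (\<lambda>(s,t). B s t) (t0, t0)"
    using cB continuous_on_eq_continuous_at[of UNIV] by auto
  have cont: "continuous (at (t0, t0) within UNIV \<times> UNIV) (\<lambda>(x, y). blinfun_mult_right (B x y))"
  proof -
    have "continuous (at (t0, t0)) (\<lambda>p. blinfun_mult_right ((\<lambda>(s,t). B s t) p))"
      by (rule bounded_linear.continuous[OF bounded_linear_blinfun_mult_right cB'])
    then show ?thesis by (simp add: case_prod_beta')
  qed
  have "((\<lambda>(x, y). F x y) has_derivative (\<lambda>(tx, ty). A t0 t0 * tx + blinfun_mult_right (B t0 t0) ty))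
      (at (t0, t0) within UNIV \<times> UNIV)"
    by (rule has_derivative_partialsI[OF fx fy cont]) auto
  then have d: "((\<lambda>(x, y). F x y) has_derivative (\<lambda>(tx, ty). A t0 t0 * tx + B t0 t0 * ty)) (at (t0, t0))"
    by simp
  have p: "((\<lambda>t. (t, t)) has_derivative (\<lambda>h. (h, h))) (at t0)"
    by (intro derivative_eq_intros) auto
  have "((\<lambda>t. (\<lambda>(x, y). F x y) (t, t)) has_derivative (\<lambda>h. (\<lambda>(tx, ty). A t0 t0 * tx + B t0 t0 * ty) (h, h))) (at t0)"
    using has_derivative_compose[OF p d] by simp
  moreover have "(\<lambda>h. (\<lambda>(tx, ty). A t0 t0 * tx + B t0 t0 * ty) (h, h)) = (*) (A t0 t0 + B t0 t0)"
    by (auto simp: algebra_simps)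
  ultimately show ?thesis
    unfolding has_field_derivative_def by simp
qed


lemma dir_deriv_S:
  fixes g :: "real^'n::finite \<Rightarrow> real" and w :: "real^'n"
  assumes dg: "\<And>k y. ((\<lambda>t. g (y + t *\<^sub>R axis k 1)) has_real_derivative pd k g y) (at 0)"
    and cg: "\<And>k. continuous_on UNIV (pd k g)"
  shows "((\<lambda>t. g (x + t *\<^sub>R (\<Sum>j\<in>S. w$j *\<^sub>R axis j 1))) has_real_derivative
           (\<Sum>j\<in>S. w$j * pd j g (x + t0 *\<^sub>R (\<Sum>j\<in>S. w$j *\<^sub>R axis j 1)))) (at t0)"
proof (induction S arbitrary: x t0 rule: infinite_finite_induct)
  case (infinite S)
  then show ?case by simp
next
  case empty
  then show ?case by simp
next
  case (insert i S)
  define W where "W = (\<Sum>j\<in>S. w$j *\<^sub>R axis j (1::real))"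
  define c where "c = w$i"
  define e where "e = (axis i 1 :: real^'n)"
  define F where "F s t = g ((x + s *\<^sub>R (c *\<^sub>R e)) + t *\<^sub>R W)" for s t
  define A where "A s t = pd i g ((x + t *\<^sub>R W) + (c * s) *\<^sub>R e) * c" for s t
  define B where "B s t = (\<Sum>j\<in>S. w$j * pd j g ((x + s *\<^sub>R (c *\<^sub>R e)) + t *\<^sub>R W))" for s t
  have dA: "((\<lambda>s. F s t) has_real_derivative A s t) (at s)" for s t
  proof -
    have 1: "((\<lambda>u. g ((x + t *\<^sub>R W) + u *\<^sub>R e)) has_real_derivative pd i g ((x + t *\<^sub>R W) + (c * s) *\<^sub>R e)) (at (c * s))"
      unfolding e_def by (rule D_at) (rule dg)
    have 2: "((\<lambda>s. c * s) has_real_derivative c) (at s)"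
      by (intro derivative_eq_intros) auto
    have "((\<lambda>s. g ((x + t *\<^sub>R W) + (c * s) *\<^sub>R e)) has_real_derivative A s t) (at s)"
      unfolding A_def using DERIV_chain2[OF 1 2] .
    moreover have "(\<lambda>s. g ((x + t *\<^sub>R W) + (c * s) *\<^sub>R e)) = (\<lambda>s. F s t)"
      unfolding F_def by (simp add: algebra_simps)
    ultimately show ?thesis by simp
  qed
  have dB: "((\<lambda>t. F s t) has_real_derivative B s t) (at t)" for s t
    unfolding F_def B_def W_def by (rule insert.IH)
  have cB: "continuous_on UNIV (\<lambda>(s,t). B s t)"
  proof -
    have "continuous_on UNIV (\<lambda>p. (\<Sum>j\<in>S. w$j * pd j g ((x + fst p *\<^sub>R (c *\<^sub>R e)) + snd p *\<^sub>R W)))"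
    proof (intro continuous_on_sum continuous_on_mult continuous_on_const)
      fix j
      show "continuous_on UNIV (\<lambda>p. pd j g ((x + fst p *\<^sub>R (c *\<^sub>R e)) + snd p *\<^sub>R W))"
        by (rule continuous_on_compose2[OF cg[of j]]) (auto intro!: continuous_intros)
    qed
    then show ?thesis unfolding B_def by (simp add: case_prod_beta')
  qed
  have "((\<lambda>t. F t t) has_real_derivative A t0 t0 + B t0 t0) (at t0)"
    by (rule chain2[OF dA dB cB])
  moreover have "(\<lambda>t. F t t) = (\<lambda>t. g (x + t *\<^sub>R (\<Sum>j\<in>insert i S. w$j *\<^sub>R axis j 1)))"
    using insert.hyps unfolding F_def W_def c_def e_def by (simp add: algebra_simps)
  moreover have "A t0 t0 + B t0 t0 = (\<Sum>j\<in>insert i S. w$j * pd j g (x + t0 *\<^sub>R (\<Sum>j\<in>insert i S. w$j *\<^sub>R axis j 1)))"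
    using insert.hyps unfolding A_def B_def W_def c_def e_def by (simp add: algebra_simps)
  ultimately show ?case by simp
qed

lemma dir_deriv:
  fixes g :: "real^'n::finite \<Rightarrow> real" and w :: "real^'n"
  assumes dg: "\<And>k y. ((\<lambda>t. g (y + t *\<^sub>R axis k 1)) has_real_derivative pd k g y) (at 0)"
    and cg: "\<And>k. continuous_on UNIV (pd k g)"
  shows "((\<lambda>t. g (x + t *\<^sub>R w)) has_real_derivative (\<Sum>j\<in>UNIV. w$j * pd j g (x + t0 *\<^sub>R w))) (at t0)"
proof -
  have w: "(\<Sum>j\<in>UNIV. w$j *\<^sub>R axis j 1) = w"
    using basis_expansion[of w] by (simp add: scalar_mult_eq_scaleR)
  show ?thesis using dir_deriv_S[OF dg cg, where x=x and S=UNIV and w=w] unfolding w .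
qed

fun tform :: "nat \<Rightarrow> ('n::finite list \<Rightarrow> real) \<Rightarrow> real^'n \<Rightarrow> real" where
  "tform 0 U v = U []"
| "tform (Suc n) U v = (\<Sum>j\<in>UNIV. v$j * tform n (\<lambda>J. U (j # J)) v)"

definition symU :: "('n list \<Rightarrow> real) \<Rightarrow> bool" where
  "symU U \<longleftrightarrow> (\<forall>J J'. mset J = mset J' \<longrightarrow> U J = U J')"

lemma symU_Cons: "symU U \<Longrightarrow> symU (\<lambda>J. U (j # J))"
  unfolding symU_def by auto

lemma symU_swap: "symU U \<Longrightarrow> U (i # j # L) = U (j # i # L)"
  unfolding symU_def by (metis mset.simps(2) add_mset_commute)

lemma symU_sum:
  fixes U :: "'p \<Rightarrow> 'a list \<Rightarrow> real"
  assumes "\<And>p. p \<in> A \<Longrightarrow> symU (U p)"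
  shows "symU (\<lambda>J. \<Sum>p\<in>A. c p * U p J)"
  unfolding symU_def
proof (intro allI impI)
  fix J J' :: "'a list" assume m: "mset J = mset J'"
  have "U p J = U p J'" if "p \<in> A" for p
    using assms[OF that] m unfolding symU_def by blast
  then show "(\<Sum>p\<in>A. c p * U p J) = (\<Sum>p\<in>A. c p * U p J')"
    by (intro sum.cong) auto
qed

lemma tform_sum: "tform n (\<lambda>J. \<Sum>p\<in>A. c p * U p J) v = (\<Sum>p\<in>A. c p * tform n (U p) v)"
proof (induction n arbitrary: U)
  case 0
  then show ?case by simp
next
  case (Suc n)
  have IH: "tform n (\<lambda>J. \<Sum>p\<in>A. c p * U p (j # J)) v = (\<Sum>p\<in>A. c p * tform n (\<lambda>J. U p (j # J)) v)" for j
    by (rule Suc.IH)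
  have "tform (Suc n) (\<lambda>J. \<Sum>p\<in>A. c p * U p J) v
      = (\<Sum>j\<in>UNIV. v$j * (\<Sum>p\<in>A. c p * tform n (\<lambda>J. U p (j # J)) v))"
    by (simp only: tform.simps IH)
  also have "\<dots> = (\<Sum>j\<in>UNIV. \<Sum>p\<in>A. c p * (v$j * tform n (\<lambda>J. U p (j # J)) v))"
    by (simp only: sum_distrib_left mult.left_commute)
  also have "\<dots> = (\<Sum>p\<in>A. \<Sum>j\<in>UNIV. c p * (v$j * tform n (\<lambda>J. U p (j # J)) v))"
    by (rule sum.swap)
  also have "\<dots> = (\<Sum>p\<in>A. c p * tform (Suc n) (U p) v)"
    by (simp only: tform.simps sum_distrib_left)
  finally show ?case .
qed

lemma tform_deriv_U:
  assumes "\<And>J. ((\<lambda>t. V J t) has_real_derivative V' J t) (at t)"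
  shows "((\<lambda>t. tform n (\<lambda>J. V J t) w) has_real_derivative tform n (\<lambda>J. V' J t) w) (at t)"
  using assms
proof (induction n arbitrary: V V')
  case 0
  then show ?case by simp
next
  case (Suc n)
  show ?case
    unfolding tform.simps by (intro DERIV_sum DERIV_cmult Suc.IH Suc.prems)
qed

lemma tform_deriv_sym:
  fixes U :: "'n::finite list \<Rightarrow> real"
  assumes "symU U"
  shows "((\<lambda>t. tform (Suc n) U (v + t *\<^sub>R w)) has_real_derivative
          real (Suc n) * tform n (\<lambda>L. \<Sum>i\<in>UNIV. w$i * U (i # L)) (v + t *\<^sub>R w)) (at t)"
  using assms
proof (induction n arbitrary: U)
  case 0
  show ?case by (auto intro!: derivative_eq_intros)
next
  case (Suc n)
  define y where "y = v + t *\<^sub>R w"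
  have IH: "((\<lambda>t. tform (Suc n) (\<lambda>J. U (j # J)) (v + t *\<^sub>R w)) has_real_derivative
          real (Suc n) * tform n (\<lambda>L. \<Sum>i\<in>UNIV. w$i * U (j # i # L)) y) (at t)" for j
    using Suc.IH[OF symU_Cons[OF Suc.prems, of j]] unfolding y_def .
  have yj: "((\<lambda>t. (v + t *\<^sub>R w)$j) has_real_derivative w$j) (at t)" for j
    by (auto intro!: derivative_eq_intros)
  have d: "((\<lambda>t. tform (Suc (Suc n)) U (v + t *\<^sub>R w)) has_real_derivative
      (\<Sum>j\<in>UNIV. w$j * tform (Suc n) (\<lambda>J. U (j # J)) y +
          real (Suc n) * tform n (\<lambda>L. \<Sum>i\<in>UNIV. w$i * U (j # i # L)) y * y$j)) (at t)"
    unfolding tform.simps(2)[of "Suc n"] y_def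
    by (intro DERIV_sum DERIV_mult yj IH[unfolded y_def])
  have m1: "(\<Sum>j\<in>UNIV. w$j * tform (Suc n) (\<lambda>J. U (j # J)) y)
      = tform (Suc n) (\<lambda>L. \<Sum>i\<in>UNIV. w$i * U (i # L)) y"
    using tform_sum[of "Suc n" "\<lambda>i. w$i" "\<lambda>i J. U (i # J)" UNIV y] by simp
  have m2: "(\<Sum>j\<in>UNIV. real (Suc n) * tform n (\<lambda>L. \<Sum>i\<in>UNIV. w$i * U (j # i # L)) y * y$j)
      = real (Suc n) * tform (Suc n) (\<lambda>L. \<Sum>i\<in>UNIV. w$i * U (i # L)) y"
  proof -
    have "\<And>j L. (\<Sum>i\<in>UNIV. w$i * U (j # i # L)) = (\<Sum>i\<in>UNIV. w$i * U (i # j # L))"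
      using symU_swap[OF Suc.prems] by auto
    then have e: "(\<lambda>L. \<Sum>i\<in>UNIV. w$i * U (j # i # L)) = (\<lambda>L. \<Sum>i\<in>UNIV. w$i * U (i # j # L))" for j
      by (intro ext) auto
    have "(\<Sum>j\<in>UNIV. real (Suc n) * tform n (\<lambda>L. \<Sum>i\<in>UNIV. w$i * U (j # i # L)) y * y$j)
        = (\<Sum>j\<in>UNIV. real (Suc n) * (y$j * tform n (\<lambda>L. \<Sum>i\<in>UNIV. w$i * U (i # j # L)) y))"
      by (simp only: e mult_ac)
    also have "\<dots> = real (Suc n) * tform (Suc n) (\<lambda>L. \<Sum>i\<in>UNIV. w$i * U (i # L)) y"
      by (simp only: tform.simps sum_distrib_left)
    finally show ?thesis .
  qed
  have eqv: "(\<Sum>j\<in>UNIV. w$j * tform (Suc n) (\<lambda>J. U (j # J)) y +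
          real (Suc n) * tform n (\<lambda>L. \<Sum>i\<in>UNIV. w$i * U (j # i # L)) y * y$j)
     = real (Suc (Suc n)) * tform (Suc n) (\<lambda>L. \<Sum>i\<in>UNIV. w$i * U (i # L)) y"
    by (simp only: sum.distrib m1 m2) (simp add: algebra_simps)
  show ?case using d[unfolded eqv] unfolding y_def .
qed

lemma tform_zero:
  fixes U :: "'n::finite list \<Rightarrow> real"
  assumes "symU U" "\<And>y. tform n U y = 0" "length J = n"
  shows "U J = 0"
  using assms
proof (induction n arbitrary: U J)
  case 0
  then show ?case by (metis length_0_conv tform.simps(1))
next
  case (Suc n)
  then obtain i L where J: "J = i # L" "length L = n" by (cases J) auto
  have z: "tform n (\<lambda>L. U (i # L)) y = 0" for y
  proof -
    have d: "((\<lambda>t. tform (Suc n) U (y + t *\<^sub>R axis i 1)) has_real_derivative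
          real (Suc n) * tform n (\<lambda>L. \<Sum>k\<in>UNIV. (axis i 1::real^'n)$k * U (k # L)) (y + 0 *\<^sub>R axis i 1)) (at 0)"
      by (rule tform_deriv_sym[OF Suc.prems(1)])
    have "(\<lambda>t. tform (Suc n) U (y + t *\<^sub>R axis i 1)) = (\<lambda>t. 0)" by (intro ext Suc.prems(2))
    then have "real (Suc n) * tform n (\<lambda>L. \<Sum>k\<in>UNIV. (axis i 1::real^'n)$k * U (k # L)) y = 0"
      using d DERIV_unique[OF _ DERIV_const] by fastforce
    moreover have "(\<lambda>L. \<Sum>k\<in>UNIV. (axis i 1::real^'n)$k * U (k # L)) = (\<lambda>L. U (i # L))"
    proof
      fix L
      have "(axis i 1::real^'n)$k * U (k # L) = (if k = i then U (k # L) else 0)" for k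
        by (simp add: axis_def)
      then show "(\<Sum>k\<in>UNIV. (axis i 1::real^'n)$k * U (k # L)) = U (i # L)"
        by (simp add: sum.delta')
    qed
    ultimately show ?thesis by simp
  qed
  show ?case using Suc.IH[OF symU_Cons[OF Suc.prems(1)] z J(2)] J(1) by simp
qed


lemma smooth_D:
  assumes "smooth f"
  shows "((\<lambda>t. pds L f (x + t *\<^sub>R axis i 1)) has_real_derivative pd i (pds L f) x) (at 0)"
  using assms unfolding smooth_def by (metis pds.simps(2))

lemma smooth_C:
  assumes "smooth f"
  shows "continuous_on UNIV (pd i (pds L f))" "continuous_on UNIV (pds L f)"
  using assms unfolding smooth_def by (metis pds.simps(2))+

lemma pds_swap:
  assumes "smooth f"
  shows "pds (i # j # L) f = pds (j # i # L) f"
proof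
  fix x
  have "pd j (pd i (pds L f)) x = pd i (pd j (pds L f)) x"
    by (rule clairaut) (use smooth_D[OF assms] smooth_C[OF assms] in \<open>simp_all flip: pds.simps\<close>)
  then show "pds (i # j # L) f x = pds (j # i # L) f x" by simp
qed

lemma pds_Cons_cong: "pds X f = pds Y f \<Longrightarrow> pds (a # X) f = pds (a # Y) f"
  by simp

lemma pds_move:
  assumes "smooth f"
  shows "pds (A @ j # B) f = pds (j # A @ B) f"
proof (induction A)
  case Nil
  then show ?case by simp
next
  case (Cons a A)
  have "pds ((a # A) @ j # B) f = pds (a # j # A @ B) f"
    using pds_Cons_cong[OF Cons.IH] by simp
  also have "\<dots> = pds (j # a # A @ B) f" by (rule pds_swap[OF assms])
  finally show ?case by simp
qed

lemma pds_perm: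
  assumes "smooth f"
  shows "mset J = mset J' \<Longrightarrow> pds J f = pds J' f"
proof (induction J arbitrary: J')
  case Nil
  then show ?case by simp
next
  case (Cons j K)
  then have "j \<in> set J'" by (metis list.set_intros(1) set_mset_mset)
  then obtain A B where J': "J' = A @ j # B" by (meson split_list)
  have "mset K = mset (A @ B)" using Cons.prems J' by simp
  then have "pds K f = pds (A @ B) f" by (rule Cons.IH)
  then have "pds (j # K) f = pds (j # A @ B) f" by (rule pds_Cons_cong)
  also have "\<dots> = pds J' f" using pds_move[OF assms] J' by simp
  finally show ?case .
qed

lemma line_derivs:
  assumes "smooth f"
  shows "(deriv ^^ n) (\<lambda>t. f (x + t *\<^sub>R w)) = (\<lambda>t. tform n (\<lambda>J. pds J f (x + t *\<^sub>R w)) w)"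
proof (induction n)
  case 0
  then show ?case by simp
next
  case (Suc n)
  have "((\<lambda>t. tform n (\<lambda>J. pds J f (x + t *\<^sub>R w)) w) has_real_derivative
      tform n (\<lambda>J. \<Sum>j\<in>UNIV. w$j * pds (j # J) f (x + t *\<^sub>R w)) w) (at t)" for t
  proof (rule tform_deriv_U)
    fix J
    show "((\<lambda>t. pds J f (x + t *\<^sub>R w)) has_real_derivative (\<Sum>j\<in>UNIV. w$j * pds (j # J) f (x + t *\<^sub>R w))) (at t)"
      using dir_deriv[of "pds J f" x w t] smooth_D[OF assms] smooth_C[OF assms] by simp
  qed
  moreover have "tform n (\<lambda>J. \<Sum>j\<in>UNIV. w$j * pds (j # J) f (x + t *\<^sub>R w)) w
      = tform (Suc n) (\<lambda>J. pds J f (x + t *\<^sub>R w)) w" for t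
    using tform_sum[of n "\<lambda>j. w$j" "\<lambda>j J. pds (j # J) f (x + t *\<^sub>R w)" UNIV w] by simp
  ultimately have "deriv (\<lambda>t. tform n (\<lambda>J. pds J f (x + t *\<^sub>R w)) w) = (\<lambda>t. tform (Suc n) (\<lambda>J. pds J f (x + t *\<^sub>R w)) w)"
    using DERIV_imp_deriv by fastforce
  then show ?case using Suc.IH by simp
qed

lemma pd_lc:
  assumes "smooth f" "finite A"
  shows "pd i (\<lambda>x. \<Sum>p\<in>A. c p * pds (g p) f x) = (\<lambda>x. \<Sum>p\<in>A. c p * pds (i # g p) f x)"
proof
  fix x
  have "((\<lambda>t. \<Sum>p\<in>A. c p * pds (g p) f (x + t *\<^sub>R axis i 1)) has_real_derivative
         (\<Sum>p\<in>A. c p * pds (i # g p) f x)) (at 0)"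
    using smooth_D[OF assms(1)] by (intro DERIV_sum DERIV_cmult) simp
  then show "pd i (\<lambda>x. \<Sum>p\<in>A. c p * pds (g p) f x) x = (\<Sum>p\<in>A. c p * pds (i # g p) f x)"
    unfolding pd_def by (rule DERIV_imp_deriv)
qed

lemma exists_M:
  fixes a :: "nat \<Rightarrow> real^'n::finite"
  assumes inj: "inj_on a {..<k}" and ind: "independent (a ` {..<k})"
  shows "\<exists>M::real^'n^'n. det M = 1 \<and> (\<forall>r. \<exists>l0. \<forall>l<k. l \<noteq> l0 \<longrightarrow> a l \<bullet> column r M = 0)"
proof -
  obtain B where B: "a ` {..<k} \<subseteq> B" "B \<subseteq> UNIV" "independent B" "UNIV \<subseteq> span B"
    by (rule maximal_independent_subset_extend[of "a ` {..<k}" UNIV, OF subset_UNIV ind])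
  have finB: "finite B" by (rule conjunct1[OF independent_bound[OF B(3)]])
  have cardB0: "card B = dim (UNIV :: (real^'n) set)"
    by (rule basis_card_eq_dim[OF subset_UNIV B(4) B(3)])
  have cardB: "card B = card (Basis :: (real^'n) set)"
    using cardB0 by (simp only: dim_UNIV)
  obtain \<phi> where \<phi>: "bij_betw \<phi> B (Basis :: (real^'n) set)"
    using finite_same_card_bij[OF finB _ cardB] by auto
  obtain g where g: "linear g" "\<forall>x\<in>B. g x = \<phi> x" "range g = span (\<phi> ` B)"
    using linear_independent_extend_subspace[OF B(3), of \<phi>] by blast
  have "range g = UNIV" using g(3) \<phi> by (simp add: bij_betw_def span_Basis)
  then have surj: "surj g" by simp
  have injg: "inj g" by (rule linear_surj_imp_inj[OF g(1) surj])
  define G where "G = matrix g"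
  have Gv: "G *v x = g x" for x unfolding G_def by (rule matrix_works[OF g(1)[folded linear_matrix_vector_mul_eq]])
  have Gg: "(*v) G = g" by (rule ext) (rule Gv)
  have "bij ((*v) G)" unfolding Gg using injg surj by (simp add: bij_def)
  then have invG: "invertible G" by (simp add: invertible_eq_bij)
  then have detG: "det G \<noteq> 0" by (simp add: invertible_det_nz)
  obtain r0 :: 'n where True by simp
  define s where "s r = (if r = r0 then 1 / det G else 1)" for r
  define D :: "real^'n^'n" where "D = (\<chi> i j. if i = j then s i else 0)"
  define M where "M = transpose G ** D"
  have detD: "det D = 1 / det G"
  proof -
    have "det D = prod (\<lambda>i. D$i$i) UNIV" by (rule det_diagonal) (simp add: D_def)
    also have "\<dots> = prod s UNIV" by (simp add: D_def)
    also have "\<dots> = 1 / det G" unfolding s_def by (simp add: prod.delta')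
    finally show ?thesis .
  qed
  have detM: "det M = 1" unfolding M_def using detG detD by (simp add: det_mul)
  have col: "a l \<bullet> column r M = s r * (g (a l))$r" for l r
  proof -
    have "M$j$r = G$r$j * s r" for j
      unfolding M_def D_def matrix_matrix_mult_def transpose_def
      by (simp add: if_distrib[of "\<lambda>x. _ * x"] sum.delta' cong: if_cong)
    then have "a l \<bullet> column r M = s r * (\<Sum>j\<in>UNIV. G$r$j * a l $ j)"
      by (simp add: inner_vec_def column_def sum_distrib_left mult_ac)
    also have "\<dots> = s r * (G *v a l)$r" by (simp add: matrix_vector_mult_def)
    finally show ?thesis by (simp add: Gv)
  qed
  have basis: "\<exists>i. g (a l) = axis i 1" if "l < k" for l
  proof -
    have "a l \<in> B" using B(1) that by auto
    then have "g (a l) \<in> Basis" using g(2) \<phi> by (auto simp: bij_betw_def)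
    then show ?thesis by (auto simp: Basis_vec_def)
  qed
  have distinct: "g (a l) \<noteq> g (a l')" if "l < k" "l' < k" "l \<noteq> l'" for l l'
  proof -
    have "a l \<noteq> a l'" using inj that by (auto simp: inj_on_def)
    then show ?thesis using injg by (auto simp: inj_on_def)
  qed
  have "\<exists>l0. \<forall>l<k. l \<noteq> l0 \<longrightarrow> a l \<bullet> column r M = 0" for r
  proof (cases "\<exists>l0<k. (g (a l0))$r \<noteq> 0")
    case True
    then obtain l0 where l0: "l0 < k" "(g (a l0))$r \<noteq> 0" by blast
    obtain i0 where i0: "g (a l0) = axis i0 1" using basis[OF l0(1)] by blast
    have "i0 = r" using l0(2) i0 by (auto simp: axis_def split: if_splits)
    have "(g (a l))$r = 0" if ll: "l < k" "l \<noteq> l0" for l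
    proof -
      obtain i where i: "g (a l) = axis i 1" using basis[OF ll(1)] by blast
      have "i \<noteq> r" using distinct[OF ll(1) l0(1) ll(2)] i i0 \<open>i0 = r\<close> by auto
      then show ?thesis using i by (simp add: axis_def)
    qed
    then show ?thesis using col by auto
  next
    case False
    then show ?thesis using col by auto
  qed
  then show ?thesis using detM by blast
qed


lemma prod_affine:
  fixes a :: "nat \<Rightarrow> real^'n::finite"
  assumes "\<forall>l<k. l \<noteq> l0 \<longrightarrow> a l \<bullet> c = 0"
  shows "\<exists>\<alpha> \<beta>. \<forall>t. (\<Prod>l<k. a l \<bullet> (v + t *\<^sub>R c)) = \<alpha> + t * \<beta>"
proof (cases "l0 < k")
  case True
  define R where "R = (\<Prod>l\<in>{..<k} - {l0}. a l \<bullet> v)"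
  have "(\<Prod>l<k. a l \<bullet> (v + t *\<^sub>R c)) = (a l0 \<bullet> v) * R + t * ((a l0 \<bullet> c) * R)" for t
  proof -
    have "(\<Prod>l<k. a l \<bullet> (v + t *\<^sub>R c)) = (a l0 \<bullet> (v + t *\<^sub>R c)) * (\<Prod>l\<in>{..<k} - {l0}. a l \<bullet> (v + t *\<^sub>R c))"
      using True by (simp add: prod.remove)
    also have "(\<Prod>l\<in>{..<k} - {l0}. a l \<bullet> (v + t *\<^sub>R c)) = R"
      unfolding R_def using assms by (intro prod.cong) (auto simp: inner_add_right)
    finally show ?thesis by (simp add: inner_add_right algebra_simps)
  qed
  then show ?thesis by blast
next
  case False
  have "(\<Prod>l<k. a l \<bullet> (v + t *\<^sub>R c)) = (\<Prod>l<k. a l \<bullet> v) + t * 0" for t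
    using assms False by (auto intro!: prod.cong simp: inner_add_right)
  then show ?thesis by blast
qed

lemma inv_facts:
  fixes M :: "real^'n::finite^'n"
  assumes "det M = 1"
  shows "\<bar>det (matrix_inv M)\<bar> = 1 \<and> matrix_inv (matrix_inv M) = M"
proof -
  have "invertible M" using assms by (simp add: invertible_det_nz)
  then have "\<exists>A'. M ** A' = mat 1 \<and> A' ** M = mat 1" unfolding invertible_def .
  then have MP: "M ** matrix_inv M = mat 1 \<and> matrix_inv M ** M = mat 1"
    unfolding matrix_inv_def by (rule someI_ex)
  define P where "P = matrix_inv M"
  have "\<exists>A'. P ** A' = mat 1 \<and> A' ** P = mat 1" using MP unfolding P_def by blast
  then have PR: "P ** matrix_inv P = mat 1 \<and> matrix_inv P ** P = mat 1"
    unfolding matrix_inv_def by (rule someI_ex)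
  have "matrix_inv P = (M ** P) ** matrix_inv P" using MP unfolding P_def by (simp add: matrix_mul_lid)
  also have "\<dots> = M ** (P ** matrix_inv P)" by (simp add: matrix_mul_assoc)
  also have "\<dots> = M" using PR by (simp add: matrix_mul_rid)
  finally have 1: "matrix_inv P = M" .
  have "det M * det P = 1" using MP det_mul[of M P] unfolding P_def by (simp add: det_I)
  then have "det P = 1" using assms by simp
  then show ?thesis using 1 unfolding P_def by simp
qed

lemma opQ_lc:
  assumes "smooth f" "finite S"
  shows "opQ Q (\<lambda>x. \<Sum>L\<in>S. c L * pds L f x)
       = (\<lambda>x. \<Sum>p\<in>UNIV \<times> UNIV \<times> S. (Q $ fst p $ fst (snd p) * c (snd (snd p))) * pds (fst p # fst (snd p) # snd (snd p)) f x)"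
proof
  fix x
  have 1: "pd k (\<lambda>x. \<Sum>L\<in>S. c L * pds L f x) = (\<lambda>x. \<Sum>L\<in>S. c L * pds (k # L) f x)" for k
    using pd_lc[OF assms, of k c "\<lambda>L. L"] by simp
  have 2: "pd j (\<lambda>x. \<Sum>L\<in>S. c L * pds (k # L) f x) = (\<lambda>x. \<Sum>L\<in>S. c L * pds (j # k # L) f x)" for j k
    using pd_lc[OF assms, of j c "\<lambda>L. k # L"] by simp
  have "opQ Q (\<lambda>x. \<Sum>L\<in>S. c L * pds L f x) x = (\<Sum>j\<in>UNIV. \<Sum>k\<in>UNIV. Q$j$k * (\<Sum>L\<in>S. c L * pds (j # k # L) f x))"
    unfolding opQ_def 1 2 ..
  also have "\<dots> = (\<Sum>j\<in>UNIV. \<Sum>k\<in>UNIV. \<Sum>L\<in>S. (Q$j$k * c L) * pds (j # k # L) f x)"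
    by (simp add: sum_distrib_left mult.assoc)
  also have "\<dots> = (\<Sum>p\<in>UNIV \<times> UNIV \<times> S. (Q $ fst p $ fst (snd p) * c (snd (snd p))) * pds (fst p # fst (snd p) # snd (snd p)) f x)"
    using assms(2) by (simp add: sum.cartesian_product split_beta)
  finally show "opQ Q (\<lambda>x. \<Sum>L\<in>S. c L * pds L f x) x = (\<Sum>p\<in>UNIV \<times> UNIV \<times> S. (Q $ fst p $ fst (snd p) * c (snd (snd p))) * pds (fst p # fst (snd p) # snd (snd p)) f x)" .
qed

lemma lc_pow:
  assumes "smooth f"
  shows "\<exists>S c. finite S \<and> (\<forall>L\<in>S. length L = 2 * m) \<and> (opQ Q ^^ m) f = (\<lambda>x. \<Sum>L\<in>S. c L * pds L f x)"
proof (induction m)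
  case 0
  have "f = (\<lambda>x. \<Sum>L\<in>{[]}. 1 * pds L f x)" by simp
  then show ?case by (intro exI[of _ "{[]}"] exI[of _ "\<lambda>_. 1"]) simp
next
  case (Suc m)
  then obtain S c where S: "finite S" "\<forall>L\<in>S. length L = 2 * m" "(opQ Q ^^ m) f = (\<lambda>x. \<Sum>L\<in>S. c L * pds L f x)"
    by blast
  define \<iota> where "\<iota> p = fst p # fst (snd p) # snd (snd p)" for p :: "'a \<times> 'a \<times> 'a list"
  define S' where "S' = \<iota> ` (UNIV \<times> UNIV \<times> S)"
  define c' where "c' L = Q $ hd L $ hd (tl L) * c (tl (tl L))" for L
  have inj: "inj_on \<iota> (UNIV \<times> UNIV \<times> S)" unfolding \<iota>_def inj_on_def by auto
  have "(opQ Q ^^ Suc m) f = opQ Q (\<lambda>x. \<Sum>L\<in>S. c L * pds L f x)" using S(3) by simp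
  also have "\<dots> = (\<lambda>x. \<Sum>p\<in>UNIV \<times> UNIV \<times> S. c' (\<iota> p) * pds (\<iota> p) f x)"
    unfolding opQ_lc[OF assms S(1)] c'_def \<iota>_def by simp
  also have "\<dots> = (\<lambda>x. \<Sum>L\<in>S'. c' L * pds L f x)"
    unfolding S'_def using sum.reindex[OF inj, of "\<lambda>L. c' L * pds L f _"] by (simp add: comp_def)
  finally have "(opQ Q ^^ Suc m) f = (\<lambda>x. \<Sum>L\<in>S'. c' L * pds L f x)" .
  moreover have "finite S'" unfolding S'_def using S(1) by simp
  moreover have "\<forall>L\<in>S'. length L = 2 * Suc m" unfolding S'_def \<iota>_def using S(2) by auto
  ultimately show ?case by blast
qed


theorem proposition2:
  fixes f :: "real^'n \<Rightarrow> real" and \<theta> :: "real^'n"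
    and q :: nat and a :: "nat \<Rightarrow> real^'n"
  assumes q_even: "even q" and q_ge: "q \<ge> 2"
    and dim: "CARD('n) \<ge> q + 1"
    and nonneg: "\<forall>x. f x \<ge> 0"
    and integrable: "integrable lborel f"
    and integral_one: "integral\<^sup>L lborel f = 1"
    and mode: "\<forall>x. f x \<le> f \<theta>"
    and smooth: "smooth f"
    and hess_inv: "invertible (hess f \<theta>)"
    and taylor: "\<forall>v. (deriv ^^ (q + 1)) (\<lambda>t. f (\<theta> + t *\<^sub>R v)) 0
                     = fact (q + 1) * (\<Prod>i<q + 1. a i \<bullet> v)"
    and a_inj: "inj_on a {..<q + 1}"
    and a_indep: "independent (a ` {..<q + 1})"
  shows "\<exists>P :: real^'n^'n. \<bar>det P\<bar> = 1 \<and>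
           (let Q = matrix_inv P ** transpose (matrix_inv P)
            in grad ((opQ Q ^^ (q div 2)) f) \<theta> = 0)"
proof -
  define k where "k = q + 1"
  define h where "h = q div 2"
  define n where "n = q - 1"
  have qh: "q = 2 * h" using q_even unfolding h_def by auto
  have h1: "h \<ge> 1" using q_ge qh by auto
  have kn: "k = Suc (Suc n)" using q_ge unfolding k_def n_def by auto
  define T where "T J = pds J f \<theta>" for J
  have symT: "symU T" unfolding symU_def T_def
  proof (intro allI impI)
    fix J J' :: "'n list" assume "mset J = mset J'"
    then show "pds J f \<theta> = pds J' f \<theta>" using pds_perm[OF smooth] by metis
  qed
  have formT: "tform k T v = fact k * (\<Prod>i<k. a i \<bullet> v)" for v
  proof -
    have "(deriv ^^ k) (\<lambda>t. f (\<theta> + t *\<^sub>R v)) 0 = tform k (\<lambda>J. pds J f (\<theta> + 0 *\<^sub>R v)) v"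
      using fun_cong[OF line_derivs[OF smooth, of k \<theta> v], of 0] .
    then show ?thesis using taylor unfolding k_def T_def by simp
  qed
  obtain M :: "real^'n^'n" where detM: "det M = 1"
    and Mcol: "\<forall>r. \<exists>l0. \<forall>l<k. l \<noteq> l0 \<longrightarrow> a l \<bullet> column r M = 0"
    using exists_M[OF a_inj a_indep] unfolding k_def by blast
  define P where "P = matrix_inv M"
  have P: "\<bar>det P\<bar> = 1" "matrix_inv P = M" using inv_facts[OF detM] unfolding P_def by auto
  define Q where "Q = M ** transpose M"
  define cc where "cc r = column r M" for r
  define Tc where "Tc r = (\<lambda>L. \<Sum>i\<in>UNIV. cc r $ i * T (i # L))" for r
  define Tcc where "Tcc r = (\<lambda>L. \<Sum>i\<in>UNIV. cc r $ i * Tc r (i # L))" for r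
  have symTc: "symU (Tc r)" for r unfolding Tc_def by (intro symU_sum symU_Cons symT)
  have symTcc: "symU (Tcc r)" for r unfolding Tcc_def by (intro symU_sum symU_Cons symTc)
  have Tcc0: "tform n (Tcc r) v = 0" for r v
  proof -
    obtain l0 where l0: "\<forall>l<k. l \<noteq> l0 \<longrightarrow> a l \<bullet> cc r = 0" using Mcol unfolding cc_def by blast
    obtain \<alpha> \<beta> where ab: "\<forall>t. (\<Prod>l<k. a l \<bullet> (v + t *\<^sub>R cc r)) = \<alpha> + t * \<beta>"
      using prod_affine[OF l0] by blast
    have d1: "((\<lambda>t. tform k T (v + t *\<^sub>R cc r)) has_real_derivative
        real k * tform (Suc n) (Tc r) (v + t *\<^sub>R cc r)) (at t)" for t
      using tform_deriv_sym[OF symT, where n="Suc n" and v=v and w="cc r" and t=t] unfolding kn Tc_def .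
    have e1: "(\<lambda>t. tform k T (v + t *\<^sub>R cc r)) = (\<lambda>t. fact k * \<alpha> + t * (fact k * \<beta>))"
      using formT ab by (auto simp: algebra_simps)
    have d1': "((\<lambda>t. tform k T (v + t *\<^sub>R cc r)) has_real_derivative fact k * \<beta>) (at t)" for t
      unfolding e1 by (auto intro!: derivative_eq_intros)
    have c1: "real k * tform (Suc n) (Tc r) (v + t *\<^sub>R cc r) = fact k * \<beta>" for t
      using DERIV_unique[OF d1 d1'] .
    have d2: "((\<lambda>t. tform (Suc n) (Tc r) (v + t *\<^sub>R cc r)) has_real_derivative
        real (Suc n) * tform n (Tcc r) (v + t *\<^sub>R cc r)) (at t)" for t
      using tform_deriv_sym[OF symTc, where n=n and v=v and w="cc r" and t=t] unfolding Tcc_def .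
    have kpos: "real k \<noteq> 0" using kn by simp
    have e2: "(\<lambda>t. tform (Suc n) (Tc r) (v + t *\<^sub>R cc r)) = (\<lambda>t. fact k * \<beta> / real k)"
    proof
      fix t show "tform (Suc n) (Tc r) (v + t *\<^sub>R cc r) = fact k * \<beta> / real k"
        using c1[of t] kpos by (simp add: field_simps)
    qed
    have d2': "((\<lambda>t. tform (Suc n) (Tc r) (v + t *\<^sub>R cc r)) has_real_derivative 0) (at 0)"
      unfolding e2 by (rule DERIV_const)
    have "real (Suc n) * tform n (Tcc r) (v + 0 *\<^sub>R cc r) = 0"
      using DERIV_unique[OF d2 d2'] .
    then show ?thesis by simp
  qed
  define W where "W = (\<lambda>L. \<Sum>r\<in>UNIV. 1 * Tcc r L)"
  have symW: "symU W" unfolding W_def by (intro symU_sum symTcc)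
  have formW: "tform n W v = 0" for v
    unfolding W_def tform_sum using Tcc0 by simp
  have W0: "W L = 0" if "length L = n" for L
    by (rule tform_zero[OF symW formW that])
  have WQ: "W L = (\<Sum>j\<in>UNIV. \<Sum>k\<in>UNIV. Q$j$k * T (j # k # L))" for L
  proof -
    have sw: "T (j # i # L) = T (i # j # L)" for i j by (rule symU_swap[OF symT])
    have "W L = (\<Sum>r\<in>UNIV. \<Sum>i\<in>UNIV. \<Sum>j\<in>UNIV. M$i$r * M$j$r * T (i # j # L))"
      unfolding W_def Tcc_def Tc_def cc_def column_def
      by (simp add: sum_distrib_left sw mult.assoc)
    also have "\<dots> = (\<Sum>i\<in>UNIV. \<Sum>r\<in>UNIV. \<Sum>j\<in>UNIV. M$i$r * M$j$r * T (i # j # L))"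
      by (rule sum.swap)
    also have "\<dots> = (\<Sum>i\<in>UNIV. \<Sum>j\<in>UNIV. \<Sum>r\<in>UNIV. M$i$r * M$j$r * T (i # j # L))"
      by (rule sum.cong[OF refl], rule sum.swap)
    also have "\<dots> = (\<Sum>i\<in>UNIV. \<Sum>j\<in>UNIV. Q$i$j * T (i # j # L))"
      unfolding Q_def matrix_matrix_mult_def transpose_def
      by (simp add: sum_distrib_right)
    finally show ?thesis .
  qed
  obtain S c where S: "finite S" "\<forall>L\<in>S. length L = 2 * (h - 1)"
    "(opQ Q ^^ (h - 1)) f = (\<lambda>x. \<Sum>L\<in>S. c L * pds L f x)"
    using lc_pow[OF smooth, where Q=Q and m="h - 1"] by blast
  have hS: "h = Suc (h - 1)" using h1 by simp
  have pow: "(opQ Q ^^ h) f = (\<lambda>x. \<Sum>p\<in>UNIV \<times> UNIV \<times> S. (Q $ fst p $ fst (snd p) * c (snd (snd p))) * pds (fst p # fst (snd p) # snd (snd p)) f x)"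
  proof -
    have "(opQ Q ^^ h) f = opQ Q ((opQ Q ^^ (h - 1)) f)" by (subst hS) simp
    then show ?thesis unfolding S(3) opQ_lc[OF smooth S(1)] .
  qed
  have finA: "finite (UNIV \<times> UNIV \<times> S :: ('n \<times> 'n \<times> 'n list) set)" using S(1) by simp
  have comp: "grad ((opQ Q ^^ h) f) \<theta> $ m0 = 0" for m0
  proof -
    have "grad ((opQ Q ^^ h) f) \<theta> $ m0 = pd m0 ((opQ Q ^^ h) f) \<theta>" by (simp add: grad_def)
    also have "\<dots> = (\<Sum>p\<in>UNIV \<times> UNIV \<times> S. (Q $ fst p $ fst (snd p) * c (snd (snd p))) * pds (m0 # fst p # fst (snd p) # snd (snd p)) f \<theta>)"
      unfolding pow pd_lc[OF smooth finA] ..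
    also have "\<dots> = (\<Sum>p\<in>UNIV \<times> UNIV \<times> S. (Q $ fst p $ fst (snd p) * c (snd (snd p))) * T (fst p # fst (snd p) # m0 # snd (snd p)))"
    proof (rule sum.cong[OF refl])
      fix p :: "'n \<times> 'n \<times> 'n list"
      have "mset (m0 # fst p # fst (snd p) # snd (snd p)) = mset (fst p # fst (snd p) # m0 # snd (snd p))"
        by simp
      then have "pds (m0 # fst p # fst (snd p) # snd (snd p)) f = pds (fst p # fst (snd p) # m0 # snd (snd p)) f"
        by (rule pds_perm[OF smooth])
      then show "(Q $ fst p $ fst (snd p) * c (snd (snd p))) * pds (m0 # fst p # fst (snd p) # snd (snd p)) f \<theta>
          = (Q $ fst p $ fst (snd p) * c (snd (snd p))) * T (fst p # fst (snd p) # m0 # snd (snd p))"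
        unfolding T_def by simp
    qed
    also have "\<dots> = (\<Sum>j\<in>UNIV. \<Sum>k\<in>UNIV. \<Sum>L\<in>S. (Q$j$k * c L) * T (j # k # m0 # L))"
      using S(1) by (simp add: sum.cartesian_product split_beta)
    also have "\<dots> = (\<Sum>L\<in>S. c L * (\<Sum>j\<in>UNIV. \<Sum>k\<in>UNIV. Q$j$k * T (j # k # m0 # L)))"
      by (simp add: sum_distrib_left sum.swap[of _ S] mult_ac)
    also have "\<dots> = (\<Sum>L\<in>S. c L * W (m0 # L))" unfolding WQ ..
    also have "\<dots> = 0"
    proof (rule sum.neutral, rule ballI)
      fix L assume "L \<in> S"
      then have "length (m0 # L) = n" using S(2) qh h1 unfolding n_def by auto
      then show "c L * W (m0 # L) = 0" using W0 by simp
    qed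
    finally show ?thesis .
  qed
  have "grad ((opQ Q ^^ (q div 2)) f) \<theta> = 0"
    using comp unfolding h_def by (simp add: vec_eq_iff)
  then show ?thesis using P unfolding Let_def Q_def by blast
qed

end
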